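(* Let $R$ be a commutative ring with identity. Then $R[X]_A$ is a residually Noetherian ring if and only if $R$ is a residually Noetherian ring.
   Context: $X$ is an indeterminate over $R$, $A=\{f\in R[X]\mid f(0)=1\}$, and $R[X]_A$ is the localization of $R[X]$ at $A$. A ring $T$ is residually Noetherian if $T/\mathfrak p$ is a Noetherian domain for every prime ideal $\mathfrak p$ of $T$. *)

theory Defs
  imports "HOL-Algebra.Algebra"
begin

definition polyA :: "('a, 'm) ring_scheme \<Rightarrow> (nat \<Rightarrow> 'a) set" where
  "polyA R = {f \<in> carrier (UP R). coeff (UP R) f 0 = \<one>\<^bsub>R\<^esub>}"

text \<open>Localization S^{-1}P of a commutative ring P at a multiplicative set S, as fractions a/s.\<close>
definition loc_rel :: "('x, 'n) ring_scheme \<Rightarrow> 'x set \<Rightarrow> (('x \<times> 'x) \<times> ('x \<times> 'x)) set" where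
  "loc_rel P S = {((a, s), (b, t)). a \<in> carrier P \<and> s \<in> S \<and> b \<in> carrier P \<and> t \<in> S \<and>
      (\<exists>u\<in>S. u \<otimes>\<^bsub>P\<^esub> ((a \<otimes>\<^bsub>P\<^esub> t) \<ominus>\<^bsub>P\<^esub> (b \<otimes>\<^bsub>P\<^esub> s)) = \<zero>\<^bsub>P\<^esub>)}"

definition loc_mult :: "('x, 'n) ring_scheme \<Rightarrow> 'x set \<Rightarrow> ('x \<times> 'x) set \<Rightarrow> ('x \<times> 'x) set \<Rightarrow> ('x \<times> 'x) set" where
  "loc_mult P S A B = {z. \<exists>p\<in>A. \<exists>q\<in>B.
      ((fst p \<otimes>\<^bsub>P\<^esub> fst q, snd p \<otimes>\<^bsub>P\<^esub> snd q), z) \<in> loc_rel P S}"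

definition loc_add :: "('x, 'n) ring_scheme \<Rightarrow> 'x set \<Rightarrow> ('x \<times> 'x) set \<Rightarrow> ('x \<times> 'x) set \<Rightarrow> ('x \<times> 'x) set" where
  "loc_add P S A B = {z. \<exists>p\<in>A. \<exists>q\<in>B.
      (((fst p \<otimes>\<^bsub>P\<^esub> snd q) \<oplus>\<^bsub>P\<^esub> (fst q \<otimes>\<^bsub>P\<^esub> snd p),
        snd p \<otimes>\<^bsub>P\<^esub> snd q), z) \<in> loc_rel P S}"

definition localization :: "('x, 'n) ring_scheme \<Rightarrow> 'x set \<Rightarrow> (('x \<times> 'x) set) ring" where
  "localization P S =
    \<lparr> carrier = (carrier P \<times> S) // loc_rel P S,
      monoid.mult = loc_mult P S,
      one = loc_rel P S `` {(\<one>\<^bsub>P\<^esub>, \<one>\<^bsub>P\<^esub>)},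
      ring.zero = loc_rel P S `` {(\<zero>\<^bsub>P\<^esub>, \<one>\<^bsub>P\<^esub>)},
      ring.add = loc_add P S \<rparr>"

definition residually_noetherian :: "('x, 'n) ring_scheme \<Rightarrow> bool" where
  "residually_noetherian T \<longleftrightarrow> (\<forall>p. primeideal p T \<longrightarrow> noetherian_domain (T Quot p))"

end

theory Submission
  imports Defs
begin


definition accn :: "('x, 'n) ring_scheme \<Rightarrow> 'x set \<Rightarrow> bool" where
  "accn T I \<longleftrightarrow> (\<forall>J::nat \<Rightarrow> 'x set. (\<forall>n. ideal (J n) T \<and> I \<subseteq> J n \<and> J n \<subseteq> J (Suc n))
      \<longrightarrow> (\<exists>N. \<forall>n\<ge>N. J n = J N))"

lemma chain_mono_le: assumes "\<And>n. (J::nat \<Rightarrow> 'x set) n \<subseteq> J (Suc n)" "m \<le> n" shows "J m \<subseteq> J n"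
  using assms by (rule lift_Suc_mono_le)

lemma chain_of_tot: "C \<subseteq> A \<Longrightarrow> (\<forall>x\<in>C. \<forall>y\<in>C. x \<subseteq> y \<or> y \<subseteq> x) \<Longrightarrow> subset.chain A C"
  unfolding subset.chain_def by auto

lemma (in ring) quot_back:
  assumes I: "ideal I R" and K: "ideal K (R Quot I)"
  shows "(+>) I ` (\<Union> K) = K"
proof
  have subset: "K \<subseteq> carrier (R Quot I)"
    using K additive_subgroup.a_subset ideal_def by blast
  show "(+>) I ` (\<Union> K) \<subseteq> K"
    using canonical_proj_vimage_in_carrier[OF I subset] canonical_proj_vimage_mem_iff[OF I subset]
    by blast
  show "K \<subseteq> (+>) I ` (\<Union> K)"
  proof
    fix x assume "x \<in> K"
    then obtain r where r: "r \<in> carrier R" "x = I +> r"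
      using subset unfolding FactRing_def A_RCOSETS_def'[of R I] by auto
    hence "r \<in> \<Union> K"
      using \<open>x \<in> K\<close> I canonical_proj_vimage_mem_iff subset by blast
    thus "x \<in> (+>) I ` (\<Union> K)" using r(2) by blast
  qed
qed

lemma noeth_quot_accn:
  assumes T: "ring T" and I: "ideal I T" and N: "noetherian_ring (T Quot I)"
  shows "accn T I"
  unfolding accn_def
proof (intro allI impI)
  interpret ring T by fact
  fix J :: "nat \<Rightarrow> 'a set"
  assume J: "\<forall>n. ideal (J n) T \<and> I \<subseteq> J n \<and> J n \<subseteq> J (Suc n)"
  have mono: "m \<le> n \<Longrightarrow> J m \<subseteq> J n" for m n using J chain_mono_le[of J m n] by blast
  let ?f = "\<lambda>K. (+>\<^bsub>T\<^esub>) I ` K"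
  let ?C = "range (\<lambda>n. ?f (J n))"
  have sub: "?C \<subseteq> {K. ideal K (T Quot I)}" using J I ring_ideal_imp_quot_ideal by auto
  have tot: "\<forall>x\<in>?C. \<forall>y\<in>?C. x \<subseteq> y \<or> y \<subseteq> x"
  proof (intro ballI)
    fix x y assume "x \<in> ?C" "y \<in> ?C"
    then obtain m n where "x = ?f (J m)" "y = ?f (J n)" by blast
    then show "x \<subseteq> y \<or> y \<subseteq> x"
      using mono[of m n] mono[of n m] by (cases "m \<le> n") (auto dest: image_mono)
  qed
  have ch: "subset.chain {K. ideal K (T Quot I)} ?C"
    using sub tot by (rule chain_of_tot)
  have "\<Union> ?C \<in> ?C" by (rule noetherian_ring.ideal_chain_is_trivial[OF N _ ch]) blast
  then obtain N where NN: "\<Union> ?C = ?f (J N)" by blast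
  show "\<exists>N. \<forall>n\<ge>N. J n = J N"
  proof (intro exI allI impI)
    fix n assume "N \<le> n"
    have "?f (J n) \<subseteq> ?f (J N)" using NN by blast
    hence "\<Union> (?f (J n)) \<subseteq> \<Union> (?f (J N))" by blast
    moreover have "J n = \<Union> (?f (J n))" "J N = \<Union> (?f (J N))"
      using ideal_incl_iff[OF I, of "J n"] ideal_incl_iff[OF I, of "J N"] J by auto
    ultimately show "J n = J N" using mono[OF \<open>N \<le> n\<close>] by auto
  qed
qed

lemma accn_quot_noeth:
  assumes T: "ring T" and I: "ideal I T" and A: "accn T I"
  shows "noetherian_ring (T Quot I)"
proof -
  interpret ring T by fact
  interpret Q: ring "T Quot I" using I by (rule ideal.quotient_is_ring)
  show ?thesis
  proof (rule Q.trivial_ideal_chain_imp_noetherian)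
    fix C assume ne: "C \<noteq> {}" and ch: "subset.chain {K. ideal K (T Quot I)} C"
    have Cid: "\<And>K. K \<in> C \<Longrightarrow> ideal K (T Quot I)" using ch unfolding subset.chain_def by blast
    have Ctot: "\<And>K K'. K \<in> C \<Longrightarrow> K' \<in> C \<Longrightarrow> K \<subseteq> K' \<or> K' \<subseteq> K"
      using ch unfolding subset.chain_def by blast
    show "\<Union>C \<in> C"
    proof (rule ccontr)
      assume nU: "\<Union>C \<notin> C"
      have up: "\<exists>K'\<in>C. K \<subset> K'" if "K \<in> C" for K
      proof -
        have "K \<noteq> \<Union>C" using nU that by auto
        moreover have "K \<subseteq> \<Union>C" using that by auto
        ultimately obtain x where "x \<in> \<Union>C" "x \<notin> K" by blast
        then obtain K' where "K' \<in> C" "x \<in> K'" by blast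
        with Ctot[OF that \<open>K' \<in> C\<close>] \<open>x \<notin> K\<close> show ?thesis by blast
      qed
      obtain K0 where K0: "K0 \<in> C" using ne by blast
      define sq where "sq = rec_nat K0 (\<lambda>_ K. SOME K'. K' \<in> C \<and> K \<subset> K')"
      have sqC: "sq n \<in> C" for n
      proof (induction n)
        case 0 thus ?case using K0 by (simp add: sq_def)
      next
        case (Suc n)
        have "sq (Suc n) = (SOME K'. K' \<in> C \<and> sq n \<subset> K')" by (simp add: sq_def)
        moreover have "\<exists>K'. K' \<in> C \<and> sq n \<subset> K'" using up[OF Suc] by blast
        ultimately show ?case using someI_ex[of "\<lambda>K'. K' \<in> C \<and> sq n \<subset> K'"] by auto
      qed
      have sq_lt: "sq n \<subset> sq (Suc n)" for n
      proof -
        have "sq (Suc n) = (SOME K'. K' \<in> C \<and> sq n \<subset> K')" by (simp add: sq_def)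
        moreover have "\<exists>K'. K' \<in> C \<and> sq n \<subset> K'" using up[OF sqC[of n]] by blast
        ultimately show ?thesis using someI_ex[of "\<lambda>K'. K' \<in> C \<and> sq n \<subset> K'"] by auto
      qed
      define J where "J n = \<Union> (sq n)" for n
      have Jid: "ideal (J n) T" for n
        unfolding J_def using quot_ideal_imp_ring_ideal[OF I Cid[OF sqC]] .
      have IJ: "I \<subseteq> J n" for n
      proof -
        have "\<zero>\<^bsub>T Quot I\<^esub> \<in> sq n" using Cid[OF sqC[of n]] by (simp add: additive_subgroup.zero_closed ideal.axioms(1))
        hence "I \<in> sq n" unfolding FactRing_def by simp
        thus ?thesis unfolding J_def by blast
      qed
      have Jm: "J n \<subseteq> J (Suc n)" for n using sq_lt[of n] unfolding J_def by blast
      obtain N where N: "\<forall>n\<ge>N. J n = J N" using A Jid IJ Jm unfolding accn_def by blast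
      have bk: "(+>\<^bsub>T\<^esub>) I ` (J n) = sq n" for n
        unfolding J_def by (rule quot_back[OF I Cid[OF sqC]])
      have "sq (Suc N) = sq N" using N bk[of N] bk[of "Suc N"] by (metis le_SucI order_refl)
      thus False using sq_lt[of N] by auto
    qed
  qed
qed



definition dle :: "('a, 'm) ring_scheme \<Rightarrow> (nat \<Rightarrow> 'a) \<Rightarrow> nat \<Rightarrow> bool" where
  "dle R f d \<longleftrightarrow> (\<forall>i>d. up_ring.coeff (UP R) f i = \<zero>\<^bsub>R\<^esub>)"

definition LC :: "('a, 'm) ring_scheme \<Rightarrow> (nat \<Rightarrow> 'a) set \<Rightarrow> nat \<Rightarrow> 'a set" where
  "LC R J d = {a. \<exists>f\<in>J. dle R f d \<and> up_ring.coeff (UP R) f d = a}"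

lemma (in ring) idealI2:
  assumes "I \<subseteq> carrier R" "\<zero> \<in> I" "\<And>a b. a \<in> I \<Longrightarrow> b \<in> I \<Longrightarrow> a \<oplus> b \<in> I"
    "\<And>a. a \<in> I \<Longrightarrow> \<ominus> a \<in> I" "\<And>a x. a \<in> I \<Longrightarrow> x \<in> carrier R \<Longrightarrow> x \<otimes> a \<in> I"
    "\<And>a x. a \<in> I \<Longrightarrow> x \<in> carrier R \<Longrightarrow> a \<otimes> x \<in> I"
  shows "ideal I R"
proof (rule idealI)
  show "ring R" by (rule ring_axioms)
  show "subgroup I (add_monoid R)"
    by (rule add.subgroupI) (use assms in \<open>auto simp: a_inv_def[symmetric]\<close>)
qed (use assms in auto)

context UP_cring
begin

lemma cm0: "c \<in> carrier R \<Longrightarrow> p \<in> carrier P \<Longrightarrow> up_ring.coeff P (up_ring.monom P c 0 \<otimes>\<^bsub>P\<^esub> p) m = c \<otimes> up_ring.coeff P p m"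
  using coeff_monom_mult[of c p 0 m] by simp

lemma cmX: "p \<in> carrier P \<Longrightarrow> up_ring.coeff P (up_ring.monom P \<one> 1 \<otimes>\<^bsub>P\<^esub> p) (Suc m) = up_ring.coeff P p m"
  using coeff_monom_mult[of \<one> p 1 m] by simp

lemma dle_add: "f \<in> carrier P \<Longrightarrow> g \<in> carrier P \<Longrightarrow> dle R f d \<Longrightarrow> dle R g d \<Longrightarrow> dle R (f \<oplus>\<^bsub>P\<^esub> g) d"
  unfolding dle_def P_def[symmetric] by simp

lemma dle_neg: "f \<in> carrier P \<Longrightarrow> dle R f d \<Longrightarrow> dle R (\<ominus>\<^bsub>P\<^esub> f) d"
  unfolding dle_def P_def[symmetric] by simp

lemma dle_m0: "c \<in> carrier R \<Longrightarrow> f \<in> carrier P \<Longrightarrow> dle R f d \<Longrightarrow> dle R (up_ring.monom P c 0 \<otimes>\<^bsub>P\<^esub> f) d"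
  unfolding dle_def P_def[symmetric] by (simp add: cm0 del: coeff_mult)

lemma dle_X: assumes "f \<in> carrier P" "dle R f d" shows "dle R (up_ring.monom P \<one> 1 \<otimes>\<^bsub>P\<^esub> f) (Suc d)"
  unfolding dle_def P_def[symmetric]
proof (intro allI impI)
  fix i assume "Suc d < i"
  then obtain j where "i = Suc j" "d < j" by (cases i) auto
  thus "up_ring.coeff P (up_ring.monom P \<one> 1 \<otimes>\<^bsub>P\<^esub> f) i = \<zero>"
    using cmX[OF assms(1)] assms(2) unfolding dle_def P_def[symmetric] by (simp del: coeff_mult)
qed

lemma dle_zero: "dle R \<zero>\<^bsub>P\<^esub> d" unfolding dle_def P_def[symmetric] by simp

lemma dle_monom: "a \<in> carrier R \<Longrightarrow> dle R (up_ring.monom P a d) d" unfolding dle_def P_def[symmetric] by simp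

lemma dle_ex: "f \<in> carrier P \<Longrightarrow> dle R f (deg R f)"
  unfolding dle_def P_def[symmetric] using deg_aboveD by simp

lemma LC_ideal: assumes J: "ideal J P" shows "ideal (LC R J d) R"
proof -
  interpret J: ideal J P by fact
  have JP: "f \<in> J \<Longrightarrow> f \<in> carrier P" for f using J.Icarr by blast
  show ?thesis
  proof (rule R.idealI2)
    show "LC R J d \<subseteq> carrier R" unfolding LC_def P_def[symmetric] using JP by auto
    show "\<zero> \<in> LC R J d" unfolding LC_def P_def[symmetric] using dle_zero J.zero_closed by force
  next
    fix a b assume "a \<in> LC R J d" "b \<in> LC R J d"
    then obtain f g where "f \<in> J" "dle R f d" "up_ring.coeff P f d = a" "g \<in> J" "dle R g d" "up_ring.coeff P g d = b"
      unfolding LC_def P_def[symmetric] by auto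
    thus "a \<oplus> b \<in> LC R J d" unfolding LC_def P_def[symmetric] using JP
      by (intro CollectI bexI[of _ "f \<oplus>\<^bsub>P\<^esub> g"]) (auto simp: dle_add J.a_closed)
  next
    fix a assume "a \<in> LC R J d"
    then obtain f where "f \<in> J" "dle R f d" "up_ring.coeff P f d = a"
      unfolding LC_def P_def[symmetric] by auto
    thus "\<ominus> a \<in> LC R J d" unfolding LC_def P_def[symmetric] using JP
      by (intro CollectI bexI[of _ "\<ominus>\<^bsub>P\<^esub> f"]) (auto simp: dle_neg J.a_inv_closed)
  next
    fix a x assume "a \<in> LC R J d" "x \<in> carrier R"
    then obtain f where f: "f \<in> J" "dle R f d" "up_ring.coeff P f d = a"
      unfolding LC_def P_def[symmetric] by auto
    have "up_ring.monom P x 0 \<otimes>\<^bsub>P\<^esub> f \<in> J" using f \<open>x \<in> carrier R\<close> by (simp add: J.I_l_closed)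
    thus "x \<otimes> a \<in> LC R J d" unfolding LC_def P_def[symmetric] using JP f \<open>x \<in> carrier R\<close>
      by (intro CollectI bexI[of _ "up_ring.monom P x 0 \<otimes>\<^bsub>P\<^esub> f"]) (auto simp: dle_m0 cm0 simp del: coeff_mult)
    moreover have "a \<in> carrier R" using f JP by (metis coeff_closed)
    ultimately show "a \<otimes> x \<in> LC R J d" using \<open>x \<in> carrier R\<close> by (simp add: R.m_comm)
  qed
qed

lemma LC_monoJ: "J \<subseteq> J' \<Longrightarrow> LC R J d \<subseteq> LC R J' d"
  unfolding LC_def P_def[symmetric] by blast

lemma LC_Suc: assumes J: "ideal J P" shows "LC R J d \<subseteq> LC R J (Suc d)"
proof
  interpret J: ideal J P by fact
  fix a assume "a \<in> LC R J d"
  then obtain f where f: "f \<in> J" "dle R f d" "up_ring.coeff P f d = a" unfolding LC_def P_def[symmetric] by auto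
  have fc: "f \<in> carrier P" using f J.Icarr by blast
  have "up_ring.monom P \<one> 1 \<otimes>\<^bsub>P\<^esub> f \<in> J" using f by (simp add: J.I_l_closed)
  moreover have "dle R (up_ring.monom P \<one> 1 \<otimes>\<^bsub>P\<^esub> f) (Suc d) \<and>
      up_ring.coeff P (up_ring.monom P \<one> 1 \<otimes>\<^bsub>P\<^esub> f) (Suc d) = a"
    using dle_X[OF fc f(2)] cmX[OF fc, of d] f(3) by blast
  ultimately show "a \<in> LC R J (Suc d)" unfolding LC_def P_def[symmetric] by blast
qed

lemma LC_monod: assumes J: "ideal J P" "d \<le> k" shows "LC R J d \<subseteq> LC R J k"
  using lift_Suc_mono_le[of "LC R J", OF LC_Suc[OF J(1)] J(2)] .

lemma LC_p: "a \<in> carrier R \<Longrightarrow> up_ring.monom P a d \<in> J \<Longrightarrow> a \<in> LC R J d"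
  unfolding LC_def P_def[symmetric] using dle_monom by force

lemma LC_eq_imp:
  assumes J: "ideal J P" and J': "ideal J' P" and sub: "J \<subseteq> J'" and eq: "\<And>d. LC R J' d \<subseteq> LC R J d"
  shows "J' \<subseteq> J"
proof -
  interpret J: ideal J P by fact
  interpret J': ideal J' P by fact
  have main: "\<forall>f\<in>J'. dle R f d \<longrightarrow> f \<in> J" for d
  proof (induction d)
    case 0
    show ?case
    proof (intro ballI impI)
      fix f assume f: "f \<in> J'" "dle R f 0"
      have fc: "f \<in> carrier P" using f J'.Icarr by blast
      have "up_ring.coeff P f 0 \<in> LC R J' 0" unfolding LC_def P_def[symmetric] using f by auto
      then obtain g where g: "g \<in> J" "dle R g 0" "up_ring.coeff P g 0 = up_ring.coeff P f 0"
        using eq unfolding LC_def P_def[symmetric] by blast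
      have gc: "g \<in> carrier P" using g J.Icarr by blast
      have "g = f"
      proof (rule up_eqI)
        fix n show "up_ring.coeff P g n = up_ring.coeff P f n"
          using g f by (cases n) (auto simp: dle_def P_def[symmetric])
      qed (use fc gc in auto)
      thus "f \<in> J" using g by simp
    qed
  next
    case (Suc d)
    show ?case
    proof (intro ballI impI)
      fix f assume f: "f \<in> J'" "dle R f (Suc d)"
      have fc: "f \<in> carrier P" using f J'.Icarr by blast
      have "up_ring.coeff P f (Suc d) \<in> LC R J' (Suc d)" unfolding LC_def P_def[symmetric] using f by auto
      then obtain g where g: "g \<in> J" "dle R g (Suc d)" "up_ring.coeff P g (Suc d) = up_ring.coeff P f (Suc d)"
        using eq unfolding LC_def P_def[symmetric] by blast
      have gc: "g \<in> carrier P" using g J.Icarr by blast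
      have hJ': "f \<ominus>\<^bsub>P\<^esub> g \<in> J'" using f g sub unfolding a_minus_def by (blast intro: J'.a_closed J'.a_inv_closed)
      have "dle R (f \<ominus>\<^bsub>P\<^esub> g) d"
        unfolding dle_def P_def[symmetric]
      proof (intro allI impI)
        fix i assume "d < i"
        show "up_ring.coeff P (f \<ominus>\<^bsub>P\<^esub> g) i = \<zero>"
        proof (cases "i = Suc d")
          case True thus ?thesis using g fc gc by simp
        next
          case False
          hence "Suc d < i" using \<open>d < i\<close> by simp
          thus ?thesis using f g fc gc by (simp add: dle_def P_def[symmetric])
        qed
      qed
      hence "f \<ominus>\<^bsub>P\<^esub> g \<in> J" using Suc.IH hJ' by blast
      hence "(f \<ominus>\<^bsub>P\<^esub> g) \<oplus>\<^bsub>P\<^esub> g \<in> J" using g by (simp add: J.a_closed)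
      moreover have "(f \<ominus>\<^bsub>P\<^esub> g) \<oplus>\<^bsub>P\<^esub> g = f" using fc gc by algebra
      ultimately show "f \<in> J" by simp
    qed
  qed
  show ?thesis
  proof
    fix f assume "f \<in> J'"
    moreover hence "f \<in> carrier P" using J'.Icarr by blast
    ultimately show "f \<in> J" using main[of "deg R f"] dle_ex[of f] by blast
  qed
qed

lemma hilbert:
  assumes p: "ideal p R" and A: "accn R p"
    and J: "\<And>n. ideal (J n) P" "\<And>n. J n \<subseteq> J (Suc n)"
    and pJ: "\<And>n a d. a \<in> p \<Longrightarrow> up_ring.monom P a d \<in> J n"
  shows "\<exists>N. \<forall>n\<ge>N. J n = J N"
proof -
  have pc: "a \<in> p \<Longrightarrow> a \<in> carrier R" for a using ideal.Icarr[OF p] .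
  have Jmono: "m \<le> n \<Longrightarrow> J m \<subseteq> J n" for m n using lift_Suc_mono_le[of J, OF J(2)] .
  have LCid: "ideal (LC R (J n) d) R" for n d using LC_ideal[OF J(1)] .
  have pLC: "p \<subseteq> LC R (J n) d" for n d using LC_p[OF pc pJ] by blast
  have LCmono: "m \<le> n \<Longrightarrow> d \<le> k \<Longrightarrow> LC R (J m) d \<subseteq> LC R (J n) k" for m n d k
    using LC_monoJ[OF Jmono[of m n]] LC_monod[OF J(1) , of d k n] by blast
  obtain N0 where N0: "\<forall>n\<ge>N0. LC R (J n) n = LC R (J N0) N0"
    using A unfolding accn_def
    by (erule_tac x="\<lambda>n. LC R (J n) n" in allE) (use LCid pLC LCmono in \<open>auto simp: le_SucI\<close>)
  have "\<forall>d. \<exists>m. \<forall>n\<ge>m. LC R (J n) d = LC R (J m) d"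
  proof
    fix d
    show "\<exists>m. \<forall>n\<ge>m. LC R (J n) d = LC R (J m) d"
      using A unfolding accn_def
      by (erule_tac x="\<lambda>n. LC R (J n) d" in allE) (use LCid pLC LCmono in \<open>auto simp: le_SucI\<close>)
  qed
  then obtain md where md: "\<And>d n. n \<ge> md d \<Longrightarrow> LC R (J n) d = LC R (J (md d)) d" by metis
  define M where "M = N0 + (\<Sum>d<N0. md d)"
  have big: "n \<ge> N0 \<Longrightarrow> d \<ge> N0 \<Longrightarrow> LC R (J n) d = LC R (J N0) N0" for n d
  proof -
    assume nd: "n \<ge> N0" "d \<ge> N0"
    have "LC R (J n) d \<subseteq> LC R (J (max n d)) (max n d)" by (rule LCmono) simp_all
    also have "\<dots> = LC R (J N0) N0" by (rule N0[rule_format]) (use nd in simp)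
    finally show ?thesis using LCmono[OF nd] by blast
  qed
  have allLC: "n \<ge> M \<Longrightarrow> LC R (J n) d = LC R (J M) d" for n d
  proof -
    assume nM: "n \<ge> M"
    show ?thesis
    proof (cases "d < N0")
      case True
      have "md d \<le> (\<Sum>d<N0. md d)" using True by (intro member_le_sum) auto
      hence "md d \<le> M" "md d \<le> n" using nM unfolding M_def by auto
      thus ?thesis using md by metis
    next
      case False
      thus ?thesis using big[of n d] big[of M d] nM unfolding M_def by simp
    qed
  qed
  show ?thesis
  proof (intro exI allI impI)
    fix n assume nM: "M \<le> n"
    have "J n \<subseteq> J M"
      by (rule LC_eq_imp[OF J(1) J(1) Jmono[OF nM]]) (use allLC[OF nM] in auto)
    thus "J n = J M" using Jmono[OF nM] by blast
  qed
qed

end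


locale mloc = cring P for P (structure) + fixes S
  assumes S_sub: "S \<subseteq> carrier P" and S_one: "\<one> \<in> S"
    and S_mult: "\<lbrakk>s \<in> S; t \<in> S\<rbrakk> \<Longrightarrow> s \<otimes> t \<in> S"
begin

abbreviation "rel \<equiv> loc_rel P S"
abbreviation "L \<equiv> localization P S"
definition cls where "cls a s = rel `` {(a, s)}"

lemma S_carr: "s \<in> S \<Longrightarrow> s \<in> carrier P" using S_sub by blast

lemma rel_iff: "((a,s),(b,t)) \<in> rel \<longleftrightarrow> a\<in>carrier P \<and> s\<in>S \<and> b\<in>carrier P \<and> t\<in>S \<and>
   (\<exists>u\<in>S. u \<otimes> (a \<otimes> t \<ominus> b \<otimes> s) = \<zero>)"
  by (simp add: loc_rel_def)

lemma rel_refl: assumes "a \<in> carrier P" "s \<in> S" shows "((a,s),(a,s)) \<in> rel"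
proof -
  have "\<one> \<otimes> (a \<otimes> s \<ominus> a \<otimes> s) = \<zero>" using assms S_carr by (simp add: r_neg a_minus_def)
  thus ?thesis unfolding rel_iff using assms S_one by blast
qed

lemma rel_sym: assumes "((a,s),(b,t)) \<in> rel" shows "((b,t),(a,s)) \<in> rel"
proof -
  from assms obtain u where h: "a\<in>carrier P" "s\<in>S" "b\<in>carrier P" "t\<in>S" "u\<in>S"
    "u \<otimes> (a \<otimes> t \<ominus> b \<otimes> s) = \<zero>" unfolding rel_iff by blast
  have c: "s \<in> carrier P" "t \<in> carrier P" "u \<in> carrier P" using h S_carr by auto
  have "u \<otimes> (b \<otimes> s \<ominus> a \<otimes> t) = \<ominus> (u \<otimes> (a \<otimes> t \<ominus> b \<otimes> s))"
    using h(1,3) c by algebra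
  also have "\<dots> = \<zero>" using h by simp
  finally show ?thesis using h unfolding rel_iff by blast
qed

lemma rel_trans: assumes "((a,s),(b,t)) \<in> rel" "((b,t),(c,w)) \<in> rel" shows "((a,s),(c,w)) \<in> rel"
proof -
  from assms obtain u v where h: "a\<in>carrier P" "s\<in>S" "b\<in>carrier P" "t\<in>S" "u\<in>S"
    "u \<otimes> (a \<otimes> t \<ominus> b \<otimes> s) = \<zero>" "c \<in> carrier P" "w \<in> S" "v \<in> S"
    "v \<otimes> (b \<otimes> w \<ominus> c \<otimes> t) = \<zero>" unfolding rel_iff by blast
  have cc: "s \<in> carrier P" "t \<in> carrier P" "u \<in> carrier P" "v \<in> carrier P" "w \<in> carrier P"
    using h S_carr by auto
  have "u \<otimes> v \<otimes> t \<otimes> (a \<otimes> w \<ominus> c \<otimes> s) =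
      v \<otimes> w \<otimes> (u \<otimes> (a \<otimes> t \<ominus> b \<otimes> s)) \<oplus> u \<otimes> s \<otimes> (v \<otimes> (b \<otimes> w \<ominus> c \<otimes> t))"
    using h(1,3,7) cc by algebra
  also have "\<dots> = \<zero>" using h cc by simp
  finally show ?thesis using h S_mult unfolding rel_iff by blast
qed

lemma rel_trans2: "(x,y) \<in> rel \<Longrightarrow> (y,z) \<in> rel \<Longrightarrow> (x,z) \<in> rel"
  by (cases x, cases y, cases z) (blast intro: rel_trans)

lemma equiv_rel: "equiv (carrier P \<times> S) rel"
proof (rule equivI)
  show "rel \<subseteq> (carrier P \<times> S) \<times> (carrier P \<times> S)" by (auto simp: loc_rel_def)
  show "refl_on (carrier P \<times> S) rel"
    by (rule refl_onI) (auto intro: rel_refl)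
  show "sym rel" by (rule symI) (auto intro: rel_sym)
  show "trans rel" by (rule transI) (auto intro: rel_trans)
qed

lemma rel_mult: assumes "((a,s),(a',s')) \<in> rel" "((b,t),(b',t')) \<in> rel"
  shows "((a \<otimes> b, s \<otimes> t),(a' \<otimes> b', s' \<otimes> t')) \<in> rel"
proof -
  from assms obtain u v where h: "a\<in>carrier P" "s\<in>S" "a'\<in>carrier P" "s'\<in>S" "u\<in>S"
    "u \<otimes> (a \<otimes> s' \<ominus> a' \<otimes> s) = \<zero>" "b \<in> carrier P" "t \<in> S" "b' \<in> carrier P" "t' \<in> S" "v \<in> S"
    "v \<otimes> (b \<otimes> t' \<ominus> b' \<otimes> t) = \<zero>" unfolding rel_iff by blast
  have cc: "s \<in> carrier P" "t \<in> carrier P" "u \<in> carrier P" "v \<in> carrier P" "s' \<in> carrier P" "t' \<in> carrier P"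
    using h S_carr by auto
  have "u \<otimes> v \<otimes> ((a \<otimes> b) \<otimes> (s' \<otimes> t') \<ominus> (a' \<otimes> b') \<otimes> (s \<otimes> t)) =
      v \<otimes> b \<otimes> t' \<otimes> (u \<otimes> (a \<otimes> s' \<ominus> a' \<otimes> s)) \<oplus> u \<otimes> a' \<otimes> s \<otimes> (v \<otimes> (b \<otimes> t' \<ominus> b' \<otimes> t))"
    using h(1,3,7,9) cc by algebra
  also have "\<dots> = \<zero>" using h cc by simp
  finally show ?thesis using h S_mult unfolding rel_iff by blast
qed

lemma rel_add: assumes "((a,s),(a',s')) \<in> rel" "((b,t),(b',t')) \<in> rel"
  shows "((a \<otimes> t \<oplus> b \<otimes> s, s \<otimes> t),(a' \<otimes> t' \<oplus> b' \<otimes> s', s' \<otimes> t')) \<in> rel"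
proof -
  from assms obtain u v where h: "a\<in>carrier P" "s\<in>S" "a'\<in>carrier P" "s'\<in>S" "u\<in>S"
    "u \<otimes> (a \<otimes> s' \<ominus> a' \<otimes> s) = \<zero>" "b \<in> carrier P" "t \<in> S" "b' \<in> carrier P" "t' \<in> S" "v \<in> S"
    "v \<otimes> (b \<otimes> t' \<ominus> b' \<otimes> t) = \<zero>" unfolding rel_iff by blast
  have cc: "s \<in> carrier P" "t \<in> carrier P" "u \<in> carrier P" "v \<in> carrier P" "s' \<in> carrier P" "t' \<in> carrier P"
    using h S_carr by auto
  have "u \<otimes> v \<otimes> ((a \<otimes> t \<oplus> b \<otimes> s) \<otimes> (s' \<otimes> t') \<ominus> (a' \<otimes> t' \<oplus> b' \<otimes> s') \<otimes> (s \<otimes> t)) =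
      v \<otimes> t \<otimes> t' \<otimes> (u \<otimes> (a \<otimes> s' \<ominus> a' \<otimes> s)) \<oplus> u \<otimes> s \<otimes> s' \<otimes> (v \<otimes> (b \<otimes> t' \<ominus> b' \<otimes> t))"
    using h(1,3,7,9) cc by algebra
  also have "\<dots> = \<zero>" using h cc by simp
  finally show ?thesis using h S_mult cc unfolding rel_iff by blast
qed

lemma cls_eq_iff: "a \<in> carrier P \<Longrightarrow> s \<in> S \<Longrightarrow> b \<in> carrier P \<Longrightarrow> t \<in> S \<Longrightarrow>
   cls a s = cls b t \<longleftrightarrow> ((a,s),(b,t)) \<in> rel"
  unfolding cls_def using equiv_class_eq_iff[OF equiv_rel] by auto

lemma cls_eqI: assumes "a \<in> carrier P" "s \<in> S" "b \<in> carrier P" "t \<in> S" "a \<otimes> t = b \<otimes> s"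
  shows "cls a s = cls b t"
proof -
  have "\<one> \<otimes> (a \<otimes> t \<ominus> b \<otimes> s) = \<zero>" using assms S_carr by simp
  thus ?thesis using assms S_one by (simp add: cls_eq_iff rel_iff) blast
qed

lemma mem_cls: "x \<in> cls a s \<longleftrightarrow> ((a,s),x) \<in> rel" by (simp add: cls_def)

lemma mult_cls: assumes "a \<in> carrier P" "s \<in> S" "b \<in> carrier P" "t \<in> S"
  shows "loc_mult P S (cls a s) (cls b t) = cls (a \<otimes> b) (s \<otimes> t)"
proof (rule equalityI; rule subsetI)
  fix z assume "z \<in> loc_mult P S (cls a s) (cls b t)"
  then obtain p q where "((a,s),p) \<in> rel" "((b,t),q) \<in> rel"
    "((fst p \<otimes> fst q, snd p \<otimes> snd q), z) \<in> rel"
    unfolding loc_mult_def by (auto simp: mem_cls)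
  moreover obtain p1 p2 q1 q2 where "p = (p1,p2)" "q = (q1,q2)" by fastforce
  ultimately have h1: "((a,s),(p1,p2)) \<in> rel" "((b,t),(q1,q2)) \<in> rel" "((p1 \<otimes> q1, p2 \<otimes> q2), z) \<in> rel" by auto
  have "((a \<otimes> b, s \<otimes> t), (p1 \<otimes> q1, p2 \<otimes> q2)) \<in> rel" using rel_mult[OF h1(1,2)] .
  thus "z \<in> cls (a \<otimes> b) (s \<otimes> t)" unfolding mem_cls using rel_trans2 h1(3) by blast
next
  fix z assume "z \<in> cls (a \<otimes> b) (s \<otimes> t)"
  hence "((fst (a,s) \<otimes> fst (b,t), snd (a,s) \<otimes> snd (b,t)), z) \<in> rel" by (simp add: mem_cls)
  moreover have "(a,s) \<in> cls a s" "(b,t) \<in> cls b t" using assms by (simp_all add: mem_cls rel_refl)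
  ultimately show "z \<in> loc_mult P S (cls a s) (cls b t)"
    unfolding loc_mult_def by blast
qed

lemma add_cls: assumes "a \<in> carrier P" "s \<in> S" "b \<in> carrier P" "t \<in> S"
  shows "loc_add P S (cls a s) (cls b t) = cls (a \<otimes> t \<oplus> b \<otimes> s) (s \<otimes> t)"
proof (rule equalityI; rule subsetI)
  fix z assume "z \<in> loc_add P S (cls a s) (cls b t)"
  then obtain p q where "((a,s),p) \<in> rel" "((b,t),q) \<in> rel"
    "((fst p \<otimes> snd q \<oplus> fst q \<otimes> snd p, snd p \<otimes> snd q), z) \<in> rel"
    unfolding loc_add_def by (auto simp: mem_cls)
  moreover obtain p1 p2 q1 q2 where "p = (p1,p2)" "q = (q1,q2)" by fastforce
  ultimately have h1: "((a,s),(p1,p2)) \<in> rel" "((b,t),(q1,q2)) \<in> rel" "((p1 \<otimes> q2 \<oplus> q1 \<otimes> p2, p2 \<otimes> q2), z) \<in> rel" by auto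
  have "((a \<otimes> t \<oplus> b \<otimes> s, s \<otimes> t), (p1 \<otimes> q2 \<oplus> q1 \<otimes> p2, p2 \<otimes> q2)) \<in> rel" using rel_add[OF h1(1,2)] .
  thus "z \<in> cls (a \<otimes> t \<oplus> b \<otimes> s) (s \<otimes> t)" unfolding mem_cls using rel_trans2 h1(3) by blast
next
  fix z assume "z \<in> cls (a \<otimes> t \<oplus> b \<otimes> s) (s \<otimes> t)"
  hence "((fst (a,s) \<otimes> snd (b,t) \<oplus> fst (b,t) \<otimes> snd (a,s), snd (a,s) \<otimes> snd (b,t)), z) \<in> rel" by (simp add: mem_cls)
  moreover have "(a,s) \<in> cls a s" "(b,t) \<in> cls b t" using assms by (simp_all add: mem_cls rel_refl)
  ultimately show "z \<in> loc_add P S (cls a s) (cls b t)"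
    unfolding loc_add_def by blast
qed

lemma L_carrier: "carrier L = {cls a s |a s. a \<in> carrier P \<and> s \<in> S}"
  unfolding localization_def quotient_def cls_def by auto

lemma L_simps: "monoid.mult L = loc_mult P S" "ring.add L = loc_add P S" "monoid.one L = cls \<one> \<one>" "ring.zero L = cls \<zero> \<one>"
  by (simp_all add: localization_def cls_def)

lemma cls_in: "a \<in> carrier P \<Longrightarrow> s \<in> S \<Longrightarrow> cls a s \<in> carrier L"
  unfolding L_carrier by blast

lemma L_cases: assumes "x \<in> carrier L"
  obtains a s where "a \<in> carrier P" "s \<in> S" "x = cls a s"
  using assms unfolding L_carrier by blast

lemma multL: "a \<in> carrier P \<Longrightarrow> s \<in> S \<Longrightarrow> b \<in> carrier P \<Longrightarrow> t \<in> S \<Longrightarrow>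
  cls a s \<otimes>\<^bsub>L\<^esub> cls b t = cls (a \<otimes> b) (s \<otimes> t)"
  by (simp add: L_simps mult_cls)
lemma addL: "a \<in> carrier P \<Longrightarrow> s \<in> S \<Longrightarrow> b \<in> carrier P \<Longrightarrow> t \<in> S \<Longrightarrow>
  cls a s \<oplus>\<^bsub>L\<^esub> cls b t = cls (a \<otimes> t \<oplus> b \<otimes> s) (s \<otimes> t)"
  by (simp add: L_simps add_cls)

lemma L_cring: "cring L"
proof (rule cringI)
  show "abelian_group L"
  proof (rule abelian_groupI)
    fix x y assume "x \<in> carrier L" "y \<in> carrier L"
    then obtain a s b t where h: "a \<in> carrier P" "s \<in> S" "b \<in> carrier P" "t \<in> S"
      "x = cls a s" "y = cls b t" by (metis L_cases)
    have c: "s \<in> carrier P" "t \<in> carrier P" using h S_carr by auto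
    show "x \<oplus>\<^bsub>L\<^esub> y \<in> carrier L" using h c S_mult by (simp add: addL cls_in)
    have "a \<otimes> t \<oplus> b \<otimes> s = b \<otimes> s \<oplus> a \<otimes> t" "s \<otimes> t = t \<otimes> s" using h c by algebra+
    then show "x \<oplus>\<^bsub>L\<^esub> y = y \<oplus>\<^bsub>L\<^esub> x" using h by (simp add: addL)
  next
    show "\<zero>\<^bsub>L\<^esub> \<in> carrier L" using S_one by (simp add: L_simps cls_in)
  next
    fix x y z assume "x \<in> carrier L" "y \<in> carrier L" "z \<in> carrier L"
    then obtain a s b t c w where h: "a \<in> carrier P" "s \<in> S" "b \<in> carrier P" "t \<in> S"
      "x = cls a s" "y = cls b t" "c \<in> carrier P" "w \<in> S" "z = cls c w" by (metis L_cases)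
    have cc: "s \<in> carrier P" "t \<in> carrier P" "w \<in> carrier P" using h S_carr by auto
    have "(a \<otimes> t \<oplus> b \<otimes> s) \<otimes> w \<oplus> c \<otimes> (s \<otimes> t) = a \<otimes> (t \<otimes> w) \<oplus> (b \<otimes> w \<oplus> c \<otimes> t) \<otimes> s"
      "s \<otimes> t \<otimes> w = s \<otimes> (t \<otimes> w)" using h cc by algebra+
    then show "x \<oplus>\<^bsub>L\<^esub> y \<oplus>\<^bsub>L\<^esub> z = x \<oplus>\<^bsub>L\<^esub> (y \<oplus>\<^bsub>L\<^esub> z)"
      using h cc S_mult by (simp add: addL)
  next
    fix x assume "x \<in> carrier L"
    then obtain a s where h: "a \<in> carrier P" "s \<in> S" "x = cls a s" by (metis L_cases)
    have cc: "s \<in> carrier P" using h S_carr by auto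
    show "\<zero>\<^bsub>L\<^esub> \<oplus>\<^bsub>L\<^esub> x = x" using h cc S_one
      by (simp add: L_simps(4) addL) 
    have "cls (\<ominus> a) s \<oplus>\<^bsub>L\<^esub> x = cls ((\<ominus> a) \<otimes> s \<oplus> a \<otimes> s) (s \<otimes> s)"
      using h by (simp add: addL)
    also have "\<dots> = cls \<zero> \<one>"
    proof (rule cls_eqI)
      show "((\<ominus> a) \<otimes> s \<oplus> a \<otimes> s) \<otimes> \<one> = \<zero> \<otimes> (s \<otimes> s)" using h cc by algebra
    qed (use h cc S_one S_mult in auto)
    finally have "cls (\<ominus> a) s \<oplus>\<^bsub>L\<^esub> x = \<zero>\<^bsub>L\<^esub>" by (simp add: L_simps)
    thus "\<exists>y\<in>carrier L. y \<oplus>\<^bsub>L\<^esub> x = \<zero>\<^bsub>L\<^esub>" using h cls_in by blast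
  qed
next
  show "comm_monoid L"
  proof (rule comm_monoidI)
    fix x y assume "x \<in> carrier L" "y \<in> carrier L"
    then obtain a s b t where h: "a \<in> carrier P" "s \<in> S" "b \<in> carrier P" "t \<in> S"
      "x = cls a s" "y = cls b t" by (metis L_cases)
    have c: "s \<in> carrier P" "t \<in> carrier P" using h S_carr by auto
    show "x \<otimes>\<^bsub>L\<^esub> y \<in> carrier L" using h c S_mult by (simp add: multL cls_in)
    show "x \<otimes>\<^bsub>L\<^esub> y = y \<otimes>\<^bsub>L\<^esub> x" using h c by (simp add: multL m_comm)
  next
    show "\<one>\<^bsub>L\<^esub> \<in> carrier L" using S_one by (simp add: L_simps cls_in)
  next
    fix x y z assume "x \<in> carrier L" "y \<in> carrier L" "z \<in> carrier L"
    then obtain a s b t c w where h: "a \<in> carrier P" "s \<in> S" "b \<in> carrier P" "t \<in> S"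
      "x = cls a s" "y = cls b t" "c \<in> carrier P" "w \<in> S" "z = cls c w" by (metis L_cases)
    have cc: "s \<in> carrier P" "t \<in> carrier P" "w \<in> carrier P" using h S_carr by auto
    show "x \<otimes>\<^bsub>L\<^esub> y \<otimes>\<^bsub>L\<^esub> z = x \<otimes>\<^bsub>L\<^esub> (y \<otimes>\<^bsub>L\<^esub> z)"
      using h cc S_mult by (simp add: multL m_assoc)
  next
    fix x assume "x \<in> carrier L"
    then obtain a s where h: "a \<in> carrier P" "s \<in> S" "x = cls a s" by (metis L_cases)
    have cc: "s \<in> carrier P" using h S_carr by auto
    show "\<one>\<^bsub>L\<^esub> \<otimes>\<^bsub>L\<^esub> x = x" using h cc S_one by (simp add: L_simps(3) multL)
  qed
next
  fix x y z assume "x \<in> carrier L" "y \<in> carrier L" "z \<in> carrier L"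
  then obtain a s b t c w where h: "a \<in> carrier P" "s \<in> S" "b \<in> carrier P" "t \<in> S"
    "x = cls a s" "y = cls b t" "c \<in> carrier P" "w \<in> S" "z = cls c w" by (metis L_cases)
  have cc: "s \<in> carrier P" "t \<in> carrier P" "w \<in> carrier P" using h S_carr by auto
  have "(a \<otimes> t \<oplus> b \<otimes> s) \<otimes> c \<otimes> (s \<otimes> w \<otimes> (t \<otimes> w)) =
     (a \<otimes> c \<otimes> (t \<otimes> w) \<oplus> b \<otimes> c \<otimes> (s \<otimes> w)) \<otimes> (s \<otimes> t \<otimes> w)" using h cc by algebra
  then have E: "cls ((a \<otimes> t \<oplus> b \<otimes> s) \<otimes> c) (s \<otimes> t \<otimes> w) =
     cls (a \<otimes> c \<otimes> (t \<otimes> w) \<oplus> b \<otimes> c \<otimes> (s \<otimes> w)) (s \<otimes> w \<otimes> (t \<otimes> w))"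
    by (intro cls_eqI) (use h cc S_mult in auto)
  have A: "(x \<oplus>\<^bsub>L\<^esub> y) \<otimes>\<^bsub>L\<^esub> z = cls ((a \<otimes> t \<oplus> b \<otimes> s) \<otimes> c) (s \<otimes> t \<otimes> w)"
  proof -
    have "x \<oplus>\<^bsub>L\<^esub> y = cls (a \<otimes> t \<oplus> b \<otimes> s) (s \<otimes> t)" unfolding h(5,6) by (rule addL) (use h in auto)
    thus ?thesis unfolding h(9) by (simp only:) (rule multL, use h cc S_mult in auto)
  qed
  have C: "x \<otimes>\<^bsub>L\<^esub> z \<oplus>\<^bsub>L\<^esub> y \<otimes>\<^bsub>L\<^esub> z = cls (a \<otimes> c \<otimes> (t \<otimes> w) \<oplus> b \<otimes> c \<otimes> (s \<otimes> w)) (s \<otimes> w \<otimes> (t \<otimes> w))"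
  proof -
    have "x \<otimes>\<^bsub>L\<^esub> z = cls (a \<otimes> c) (s \<otimes> w)" unfolding h(5,9) by (rule multL) (use h in auto)
    moreover have "y \<otimes>\<^bsub>L\<^esub> z = cls (b \<otimes> c) (t \<otimes> w)" unfolding h(6,9) by (rule multL) (use h in auto)
    ultimately show ?thesis by (simp only:) (rule addL, use h cc S_mult in auto)
  qed
  show "(x \<oplus>\<^bsub>L\<^esub> y) \<otimes>\<^bsub>L\<^esub> z = x \<otimes>\<^bsub>L\<^esub> z \<oplus>\<^bsub>L\<^esub> y \<otimes>\<^bsub>L\<^esub> z"
    unfolding A C by (rule E)
qed

end


definition epsL :: "('a, 'm) ring_scheme \<Rightarrow> ((nat \<Rightarrow> 'a) \<times> (nat \<Rightarrow> 'a)) set \<Rightarrow> 'a" where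
  "epsL R Z = up_ring.coeff (UP R) (fst (SOME p. p \<in> Z)) 0"

context UP_cring
begin

lemma coeff0_mult: "f \<in> carrier P \<Longrightarrow> g \<in> carrier P \<Longrightarrow>
   up_ring.coeff P (f \<otimes>\<^bsub>P\<^esub> g) 0 = up_ring.coeff P f 0 \<otimes> up_ring.coeff P g 0"
  by simp

lemma polyA_iff: "s \<in> polyA R \<longleftrightarrow> s \<in> carrier P \<and> up_ring.coeff P s 0 = \<one>"
  by (simp add: polyA_def P_def)

lemma polyA_mloc: "mloc P (polyA R)"
proof (rule mloc.intro)
  show "cring P" by (rule UP_cring)
  show "mloc_axioms P (polyA R)"
  proof
    show "polyA R \<subseteq> carrier P" using polyA_iff by blast
    show "\<one>\<^bsub>P\<^esub> \<in> polyA R" using polyA_iff by simp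
    fix s t assume "s \<in> polyA R" "t \<in> polyA R"
    thus "s \<otimes>\<^bsub>P\<^esub> t \<in> polyA R" using polyA_iff coeff0_mult by simp
  qed
qed

end

sublocale UP_cring \<subseteq> LZ: mloc P "polyA R" by (rule polyA_mloc)

context UP_cring
begin

lemma rel_coeff0: assumes "((f,s),(g,t)) \<in> LZ.rel"
  shows "up_ring.coeff P f 0 = up_ring.coeff P g 0"
proof -
  from assms obtain u where h: "f \<in> carrier P" "s \<in> polyA R" "g \<in> carrier P" "t \<in> polyA R"
    "u \<in> polyA R" "u \<otimes>\<^bsub>P\<^esub> (f \<otimes>\<^bsub>P\<^esub> t \<ominus>\<^bsub>P\<^esub> g \<otimes>\<^bsub>P\<^esub> s) = \<zero>\<^bsub>P\<^esub>"
    unfolding LZ.rel_iff by blast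
  have c: "s \<in> carrier P" "t \<in> carrier P" "u \<in> carrier P" "up_ring.coeff P s 0 = \<one>"
    "up_ring.coeff P t 0 = \<one>" "up_ring.coeff P u 0 = \<one>" using h polyA_iff by auto
  define w where "w = f \<otimes>\<^bsub>P\<^esub> t \<ominus>\<^bsub>P\<^esub> g \<otimes>\<^bsub>P\<^esub> s"
  have wc: "w \<in> carrier P" unfolding w_def using h c by simp
  have fc0: "up_ring.coeff P f 0 \<in> carrier R" "up_ring.coeff P g 0 \<in> carrier R"
    using h(1,3) by (simp_all only: coeff_closed)
  have "\<zero> = up_ring.coeff P (u \<otimes>\<^bsub>P\<^esub> w) 0" using h(6) unfolding w_def by simp
  also have "\<dots> = up_ring.coeff P u 0 \<otimes> up_ring.coeff P w 0" by (rule coeff0_mult[OF c(3) wc])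
  also have "up_ring.coeff P w 0 = up_ring.coeff P (f \<otimes>\<^bsub>P\<^esub> t) 0 \<ominus> up_ring.coeff P (g \<otimes>\<^bsub>P\<^esub> s) 0"
    unfolding w_def using h c by (intro coeff_minus) simp_all
  also have "up_ring.coeff P (f \<otimes>\<^bsub>P\<^esub> t) 0 = up_ring.coeff P f 0"
    using coeff0_mult[OF h(1) c(2)] c fc0 by simp
  also have "up_ring.coeff P (g \<otimes>\<^bsub>P\<^esub> s) 0 = up_ring.coeff P g 0"
    using coeff0_mult[OF h(3) c(1)] c fc0 by simp
  finally have "up_ring.coeff P f 0 \<ominus> up_ring.coeff P g 0 = \<zero>" using c fc0 by simp
  thus ?thesis using R.r_right_minus_eq[OF fc0] by blast
qed

lemma eps_cls: assumes "f \<in> carrier P" "s \<in> polyA R"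
  shows "epsL R (LZ.cls f s) = up_ring.coeff P f 0"
proof -
  have ex: "\<exists>p. p \<in> LZ.cls f s" using assms LZ.rel_refl LZ.mem_cls by blast
  obtain p1 p2 where pp: "(SOME p. p \<in> LZ.cls f s) = (p1, p2)" by fastforce
  have "(p1, p2) \<in> LZ.cls f s" using someI_ex[OF ex] pp by simp
  hence "((f,s),(p1,p2)) \<in> LZ.rel" by (simp add: LZ.mem_cls)
  hence "up_ring.coeff P f 0 = up_ring.coeff P p1 0" by (rule rel_coeff0)
  thus ?thesis unfolding epsL_def P_def[symmetric] using pp by simp
qed

lemma eps_hom: "epsL R \<in> ring_hom LZ.L R"
proof (rule ring_hom_memI)
  fix x assume "x \<in> carrier LZ.L"
  then obtain f s where h: "f \<in> carrier P" "s \<in> polyA R" "x = LZ.cls f s" by (metis LZ.L_cases)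
  show "epsL R x \<in> carrier R" using h by (simp add: eps_cls)
next
  fix x y assume "x \<in> carrier LZ.L" "y \<in> carrier LZ.L"
  then obtain f s g t where h: "f \<in> carrier P" "s \<in> polyA R" "x = LZ.cls f s"
    "g \<in> carrier P" "t \<in> polyA R" "y = LZ.cls g t" by (metis LZ.L_cases)
  have c: "s \<in> carrier P" "t \<in> carrier P" "up_ring.coeff P s 0 = \<one>"
    "up_ring.coeff P t 0 = \<one>" using h polyA_iff by auto
  show "epsL R (x \<otimes>\<^bsub>LZ.L\<^esub> y) = epsL R x \<otimes> epsL R y"
    using h c LZ.S_mult by (simp add: LZ.multL eps_cls coeff0_mult del: coeff_mult)
  show "epsL R (x \<oplus>\<^bsub>LZ.L\<^esub> y) = epsL R x \<oplus> epsL R y"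
    using h c LZ.S_mult by (simp add: LZ.addL eps_cls coeff0_mult del: coeff_mult)
next
  show "epsL R \<one>\<^bsub>LZ.L\<^esub> = \<one>"
    using LZ.S_one by (simp add: LZ.L_simps eps_cls)
qed

lemma eps_hom_ring: "ring_hom_ring LZ.L R (epsL R)"
  by (rule ring_hom_ringI2) (use LZ.L_cring eps_hom cring.axioms(1) R.ring_axioms in auto)

lemma iota_hom: "(\<lambda>f. LZ.cls f \<one>\<^bsub>P\<^esub>) \<in> ring_hom P LZ.L"
proof (rule ring_hom_memI)
  fix x assume "x \<in> carrier P"
  thus "LZ.cls x \<one>\<^bsub>P\<^esub> \<in> carrier LZ.L" using LZ.S_one by (simp add: LZ.cls_in)
next
  fix x y assume "x \<in> carrier P" "y \<in> carrier P"
  thus "LZ.cls (x \<otimes>\<^bsub>P\<^esub> y) \<one>\<^bsub>P\<^esub> = LZ.cls x \<one>\<^bsub>P\<^esub> \<otimes>\<^bsub>LZ.L\<^esub> LZ.cls y \<one>\<^bsub>P\<^esub>"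
    using LZ.S_one by (simp add: LZ.multL)
  show "LZ.cls (x \<oplus>\<^bsub>P\<^esub> y) \<one>\<^bsub>P\<^esub> = LZ.cls x \<one>\<^bsub>P\<^esub> \<oplus>\<^bsub>LZ.L\<^esub> LZ.cls y \<one>\<^bsub>P\<^esub>"
    using \<open>x \<in> carrier P\<close> \<open>y \<in> carrier P\<close> LZ.S_one by (simp add: LZ.addL)
next
  show "LZ.cls \<one>\<^bsub>P\<^esub> \<one>\<^bsub>P\<^esub> = \<one>\<^bsub>LZ.L\<^esub>" by (simp add: LZ.L_simps)
qed

lemma iota_hom_ring: "ring_hom_ring P LZ.L (\<lambda>f. LZ.cls f \<one>\<^bsub>P\<^esub>)"
  by (rule ring_hom_ringI2) (use LZ.L_cring iota_hom cring.axioms(1) P.ring_axioms in auto)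

definition cc where "cc a = LZ.cls (up_ring.monom P a 0) \<one>\<^bsub>P\<^esub>"

lemma cc_hom_ring: "ring_hom_ring R LZ.L cc"
proof -
  have "(\<lambda>f. LZ.cls f \<one>\<^bsub>P\<^esub>) \<circ> (\<lambda>a. up_ring.monom P a 0) \<in> ring_hom R LZ.L"
    by (rule ring_hom_trans[OF const_ring_hom iota_hom])
  hence "cc \<in> ring_hom R LZ.L" unfolding cc_def comp_def .
  thus ?thesis
    by (intro ring_hom_ringI2) (use LZ.L_cring cring.axioms(1) R.ring_axioms in auto)
qed

lemma cc_carrier: "a \<in> carrier R \<Longrightarrow> cc a \<in> carrier LZ.L"
  unfolding cc_def using LZ.S_one by (simp add: LZ.cls_in)

lemma eps_cc: "a \<in> carrier R \<Longrightarrow> epsL R (cc a) = a"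
  unfolding cc_def using LZ.S_one by (simp add: eps_cls)

lemma noeth_dom_iff: "noetherian_domain T \<longleftrightarrow> noetherian_ring T \<and> domain T"
  unfolding noetherian_domain_def noetherian_ring_def domain_def by blast

lemma dir1: assumes LN: "residually_noetherian LZ.L" shows "residually_noetherian R"
  unfolding residually_noetherian_def
proof (intro allI impI)
  fix p assume pp: "primeideal p R"
  interpret E: ring_hom_ring LZ.L R "epsL R" by (rule eps_hom_ring)
  let ?Pp = "{x \<in> carrier LZ.L. epsL R x \<in> p}"
  have Ppr: "primeideal ?Pp LZ.L" by (rule E.primeideal_vimage[OF LZ.L_cring pp])
  have "noetherian_domain (LZ.L Quot ?Pp)" using LN Ppr unfolding residually_noetherian_def by blast
  hence "noetherian_ring (LZ.L Quot ?Pp)" by (simp add: noeth_dom_iff)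
  hence accL: "accn LZ.L ?Pp"
    by (intro noeth_quot_accn) (use Ppr primeideal.axioms(1) E.R.ring_axioms in auto)
  have pid: "ideal p R" using pp primeideal.axioms(1) by blast
  have "accn R p"
    unfolding accn_def
  proof (intro allI impI)
    fix I :: "nat \<Rightarrow> 'a set"
    assume I: "\<forall>n. ideal (I n) R \<and> p \<subseteq> I n \<and> I n \<subseteq> I (Suc n)"
    define K where "K n = {x \<in> carrier LZ.L. epsL R x \<in> I n}" for n
    have Kp: "\<forall>n. ideal (K n) LZ.L \<and> ?Pp \<subseteq> K n \<and> K n \<subseteq> K (Suc n)"
    proof
      fix n
      have "ideal (K n) LZ.L" unfolding K_def using I E.ideal_vimage by blast
      moreover have "?Pp \<subseteq> K n" "K n \<subseteq> K (Suc n)" unfolding K_def using I by blast+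
      ultimately show "ideal (K n) LZ.L \<and> ?Pp \<subseteq> K n \<and> K n \<subseteq> K (Suc n)" by blast
    qed
    have "(\<forall>n. ideal (K n) LZ.L \<and> ?Pp \<subseteq> K n \<and> K n \<subseteq> K (Suc n)) \<longrightarrow> (\<exists>N. \<forall>n\<ge>N. K n = K N)"
      using accL unfolding accn_def by (rule spec[where x=K])
    hence "\<exists>N. \<forall>n\<ge>N. K n = K N" using Kp by (rule mp)
    then obtain N where N: "\<forall>n\<ge>N. K n = K N" ..
    have Iiff: "I n = {a \<in> carrier R. cc a \<in> K n}" for n
    proof (intro equalityI subsetI)
      fix a assume a: "a \<in> I n"
      have Iid: "ideal (I n) R" using I by blast
      have ac: "a \<in> carrier R" using ideal.Icarr[OF Iid a] .
      have "cc a \<in> carrier LZ.L" by (rule cc_carrier[OF ac])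
      moreover have "epsL R (cc a) \<in> I n" using eps_cc[OF ac] a by simp
      ultimately show "a \<in> {a \<in> carrier R. cc a \<in> K n}" using ac unfolding K_def by blast
    next
      fix a assume "a \<in> {a \<in> carrier R. cc a \<in> K n}"
      hence ac: "a \<in> carrier R" and "cc a \<in> K n" by auto
      hence "epsL R (cc a) \<in> I n" unfolding K_def by blast
      thus "a \<in> I n" using eps_cc[OF ac] by simp
    qed
    show "\<exists>N. \<forall>n\<ge>N. I n = I N"
    proof (intro exI allI impI)
      fix n assume "N \<le> n"
      hence "K n = K N" using N by blast
      thus "I n = I N" unfolding Iiff[of n] Iiff[of N] by simp
    qed
  qed
  hence "noetherian_ring (R Quot p)" using accn_quot_noeth R.ring_axioms pid by blast
  moreover have "domain (R Quot p)" using pp by (rule primeideal.quotient_is_domain)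
  ultimately show "noetherian_domain (R Quot p)" by (simp add: noeth_dom_iff)
qed

lemma cls_split1: assumes a: "f \<in> carrier P" "s \<in> polyA R"
  shows "LZ.cls f s \<otimes>\<^bsub>LZ.L\<^esub> LZ.cls s \<one>\<^bsub>P\<^esub> = LZ.cls f \<one>\<^bsub>P\<^esub>"
proof -
  have sc: "s \<in> carrier P" using a LZ.S_carr by blast
  have "LZ.cls f s \<otimes>\<^bsub>LZ.L\<^esub> LZ.cls s \<one>\<^bsub>P\<^esub> = LZ.cls (f \<otimes>\<^bsub>P\<^esub> s) (s \<otimes>\<^bsub>P\<^esub> \<one>\<^bsub>P\<^esub>)"
    by (rule LZ.multL) (use a sc LZ.S_one in auto)
  also have "\<dots> = LZ.cls f \<one>\<^bsub>P\<^esub>"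
    by (rule LZ.cls_eqI) (use a sc LZ.S_one LZ.S_mult in \<open>simp_all add: P.m_assoc\<close>)
  finally show ?thesis .
qed

lemma cls_split2: "f \<in> carrier P \<Longrightarrow> s \<in> polyA R \<Longrightarrow>
  LZ.cls f \<one>\<^bsub>P\<^esub> \<otimes>\<^bsub>LZ.L\<^esub> LZ.cls \<one>\<^bsub>P\<^esub> s = LZ.cls f s"
  using LZ.S_one LZ.S_carr by (simp add: LZ.multL)

lemma dir2: assumes RN: "residually_noetherian R" shows "residually_noetherian LZ.L"
  unfolding residually_noetherian_def
proof (intro allI impI)
  fix Pp assume Ppr: "primeideal Pp LZ.L"
  interpret C: ring_hom_ring R LZ.L cc by (rule cc_hom_ring)
  interpret I: ring_hom_ring P LZ.L "\<lambda>f. LZ.cls f \<one>\<^bsub>P\<^esub>" by (rule iota_hom_ring)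
  interpret L: cring LZ.L by (rule LZ.L_cring)
  let ?p = "{a \<in> carrier R. cc a \<in> Pp}"
  have pp: "primeideal ?p R" by (rule C.primeideal_vimage[OF R.is_cring Ppr])
  have pid: "ideal ?p R" using pp primeideal.axioms(1) by blast
  have "noetherian_domain (R Quot ?p)" using RN pp unfolding residually_noetherian_def by blast
  hence "noetherian_ring (R Quot ?p)" by (simp add: noeth_dom_iff)
  hence accR: "accn R ?p"
    by (intro noeth_quot_accn) (use pid R.ring_axioms in auto)
  have Pid: "ideal Pp LZ.L" using Ppr primeideal.axioms(1) by blast
  have "accn LZ.L Pp"
    unfolding accn_def
  proof (intro allI impI)
    fix K :: "nat \<Rightarrow> ((nat \<Rightarrow> 'a) \<times> (nat \<Rightarrow> 'a)) set set"
    assume K: "\<forall>n. ideal (K n) LZ.L \<and> Pp \<subseteq> K n \<and> K n \<subseteq> K (Suc n)"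
    define J where "J n = {f \<in> carrier P. LZ.cls f \<one>\<^bsub>P\<^esub> \<in> K n}" for n
    have Jid: "ideal (J n) P" for n unfolding J_def using K I.ideal_vimage by blast
    have Jm: "J n \<subseteq> J (Suc n)" for n unfolding J_def using K by blast
    have pJ: "up_ring.monom P a d \<in> J n" if "a \<in> ?p" for n a d
    proof -
      have a: "a \<in> carrier R" "cc a \<in> Pp" using that by auto
      have eq: "up_ring.monom P a d = up_ring.monom P a 0 \<otimes>\<^bsub>P\<^esub> up_ring.monom P \<one> d"
        using monom_mult[of a \<one> 0 d] a by simp
      have "LZ.cls (up_ring.monom P a d) \<one>\<^bsub>P\<^esub> = cc a \<otimes>\<^bsub>LZ.L\<^esub> LZ.cls (up_ring.monom P \<one> d) \<one>\<^bsub>P\<^esub>"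
        unfolding eq cc_def using a by (simp add: I.hom_mult)
      moreover have "cc a \<in> K n" using a K by blast
      moreover have "LZ.cls (up_ring.monom P \<one> d) \<one>\<^bsub>P\<^esub> \<in> carrier LZ.L"
        using LZ.S_one by (simp add: LZ.cls_in)
      ultimately have "LZ.cls (up_ring.monom P a d) \<one>\<^bsub>P\<^esub> \<in> K n"
        using K ideal.I_r_closed by metis
      thus ?thesis unfolding J_def using a by simp
    qed
    have "\<exists>N. \<forall>n\<ge>N. J n = J N" by (rule hilbert[where J=J, OF pid accR Jid Jm pJ])
    then obtain N where N: "\<forall>n\<ge>N. J n = J N" ..
    have Kiff: "x \<in> K n \<longleftrightarrow> f \<in> J n" if "f \<in> carrier P" "s \<in> polyA R" "x = LZ.cls f s" for x f s n
    proof
      assume "x \<in> K n"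
      hence "LZ.cls f s \<otimes>\<^bsub>LZ.L\<^esub> LZ.cls s \<one>\<^bsub>P\<^esub> \<in> K n"
        using that K ideal.I_r_closed LZ.cls_in LZ.S_one LZ.S_carr by metis
      thus "f \<in> J n" unfolding J_def using that cls_split1 by simp
    next
      assume "f \<in> J n"
      hence "LZ.cls f \<one>\<^bsub>P\<^esub> \<otimes>\<^bsub>LZ.L\<^esub> LZ.cls \<one>\<^bsub>P\<^esub> s \<in> K n"
        unfolding J_def using that K ideal.I_r_closed LZ.cls_in LZ.S_one LZ.S_carr P.one_closed
        by (metis (no_types, lifting) mem_Collect_eq)
      thus "x \<in> K n" using that cls_split2 by simp
    qed
    have Kc: "K n \<subseteq> carrier LZ.L" for n
    proof
      fix x assume x: "x \<in> K n"
      have "ideal (K n) LZ.L" using K by blast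
      thus "x \<in> carrier LZ.L" using x by (rule ideal.Icarr)
    qed
    show "\<exists>N. \<forall>n\<ge>N. K n = K N"
    proof (intro exI allI impI)
      fix n assume "N \<le> n"
      have JnN: "J n = J N" using N[rule_format, OF \<open>N \<le> n\<close>] .
      show "K n = K N"
      proof (intro equalityI subsetI)
        fix x assume x: "x \<in> K n"
        have "x \<in> carrier LZ.L" using Kc[of n] x by (rule subsetD)
        then obtain f s where fs: "f \<in> carrier P" "s \<in> polyA R" "x = LZ.cls f s"
          by (rule LZ.L_cases)
        thus "x \<in> K N" using Kiff[OF fs, of n] Kiff[OF fs, of N] x JnN by simp
      next
        fix x assume x: "x \<in> K N"
        have "x \<in> carrier LZ.L" using Kc[of N] x by (rule subsetD)
        then obtain f s where fs: "f \<in> carrier P" "s \<in> polyA R" "x = LZ.cls f s"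
          by (rule LZ.L_cases)
        thus "x \<in> K n" using Kiff[OF fs, of n] Kiff[OF fs, of N] x JnN by simp
      qed
    qed
  qed
  hence "noetherian_ring (LZ.L Quot Pp)" using accn_quot_noeth cring.axioms(1)[OF LZ.L_cring] Pid by blast
  moreover have "domain (LZ.L Quot Pp)" using Ppr by (rule primeideal.quotient_is_domain)
  ultimately show "noetherian_domain (LZ.L Quot Pp)" by (simp add: noeth_dom_iff)
qed

end

theorem mainTheorem3:
  fixes R :: "('a, 'm) ring_scheme"
  assumes "cring R"
  shows "residually_noetherian (localization (UP R) (polyA R)) \<longleftrightarrow> residually_noetherian R"
proof -
  interpret U: UP_cring R "UP R" using assms by (simp add: UP_cring_def UP_def)
  show ?thesis using U.dir1 U.dir2 by blast
qed


end
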